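(* Let $b = (b(0), \dots, b(L-1))$ be a solution of length $L$. Then $$b(0) \ge L - \frac{1}{2} - \sqrt{2L + \frac{1}{4}}.$$
   Context: A solution of length $L \ge 1$ is a sequence $(b(0), \dots, b(L-1))$ of integers with $0 \le b(i) < L$ such that for every $0 \le i < L$, $b(i) = |\{ j : 0 \le j < L,\ b(j) = i\}|$. *)

theory Defs
  imports Complex_Main
begin

text \<open>Values are natural numbers (nonnegative integers); entries outside {0..<L} are irrelevant.\<close>
definition is_solution :: "nat \<Rightarrow> (nat \<Rightarrow> nat) \<Rightarrow> bool" where
  "is_solution L b \<longleftrightarrow> L \<ge> 1 \<and> (\<forall>i<L. b i < L) \<and>
     (\<forall>i<L. b i = card {j. j < L \<and> b j = i})"

end

theory Submission
  imports Defs
begin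

lemma sum_ge_triangle:
  fixes S :: "nat set"
  assumes "finite S"
  shows "card S * (card S - 1) \<le> 2 * \<Sum>S"
  using assms
proof (induction "card S" arbitrary: S)
  case 0
  then show ?case by simp
next
  case (Suc n)
  then have ne: "S \<noteq> {}" by auto
  define M where "M = Max S"
  have MS: "M \<in> S" using Suc.prems ne M_def by simp
  have cS: "card (S - {M}) = n" using Suc.hyps(2) MS Suc.prems by simp
  have IH: "n * (n - 1) \<le> 2 * \<Sum>(S - {M})" using Suc.hyps(1)[of "S - {M}"] cS Suc.prems by simp
  have sub: "S \<subseteq> {..M}" using Suc.prems M_def by auto
  have "Suc n \<le> Suc M" using card_mono[OF _ sub] Suc.hyps(2) by simp
  hence "n \<le> M" by simp
  have "\<Sum>S = M + \<Sum>(S - {M})" using Suc.prems MS by (simp add: sum.remove)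
  then show ?case using IH \<open>n \<le> M\<close> Suc.hyps(2)[symmetric]
    by (cases n) (auto simp: algebra_simps)
qed

theorem mainTheorem5:
  fixes L :: nat and b :: "nat \<Rightarrow> nat"
  assumes "is_solution L b"
  shows "real (b 0) \<ge> real L - 1/2 - sqrt (2 * real L + 1/4)"
proof -
  have L1: "L \<ge> 1" and lt: "\<And>i. i < L \<Longrightarrow> b i < L"
    and cnt: "\<And>i. i < L \<Longrightarrow> b i = card {j. j < L \<and> b j = i}"
    using assms unfolding is_solution_def by auto
  have img: "b ` {..<L} \<subseteq> {..<L}" using lt by auto
  have s1: "(\<Sum>i<L. b i) = L"
  proof -
    have "(\<Sum>i<L. b i) = (\<Sum>i<L. sum (\<lambda>_. 1::nat) {j \<in> {..<L}. b j = i})"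
      by (rule sum.cong) (auto simp: cnt)
    also have "\<dots> = sum (\<lambda>_. 1::nat) {..<L}"
      by (rule sum.group[OF _ _ img]) auto
    finally show ?thesis by simp
  qed
  have s2: "(\<Sum>i<L. i * b i) = L"
  proof -
    have "(\<Sum>i<L. i * b i) = (\<Sum>i<L. sum b {j \<in> {..<L}. b j = i})"
      by (rule sum.cong) (auto simp: cnt)
    also have "\<dots> = sum b {..<L}"
      by (rule sum.group[OF _ _ img]) auto
    finally show ?thesis using s1 by simp
  qed
  define S where "S = {j \<in> {..<L}. b j \<noteq> 0}"
  define Z where "Z = {j \<in> {..<L}. b j = 0}"
  have finS: "finite S" unfolding S_def by simp
  have "\<Sum>S \<le> (\<Sum>i\<in>S. i * b i)" by (rule sum_mono) (auto simp: S_def)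
  also have "\<dots> \<le> (\<Sum>i<L. i * b i)" by (rule sum_mono2) (auto simp: S_def)
  finally have "\<Sum>S \<le> L" using s2 by simp
  hence key: "card S * (card S - 1) \<le> 2 * L" using sum_ge_triangle[OF finS] by linarith
  have b0: "b 0 = card Z" using cnt[of 0] L1 unfolding Z_def by (simp add: conj_commute)
  have "card Z + card S = card (Z \<union> S)"
    by (rule card_Un_disjoint[symmetric]) (auto simp: Z_def S_def)
  also have "Z \<union> S = {..<L}" by (auto simp: Z_def S_def)
  finally have cZS: "card Z + card S = L" by simp
  define m where "m = real (card S)"
  have "m * (m - 1) \<le> 2 * real L"
  proof (cases "card S")
    case 0 then show ?thesis by (simp add: m_def)
  next
    case (Suc k)
    then have "real (card S * (card S - 1)) \<le> real (2 * L)" using key by linarith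
    then show ?thesis using Suc by (simp add: m_def algebra_simps)
  qed
  hence "(m - 1/2)^2 \<le> 2 * real L + 1/4" by (simp add: power2_eq_square algebra_simps)
  hence "\<bar>m - 1/2\<bar> \<le> sqrt (2 * real L + 1/4)" using real_le_rsqrt real_sqrt_abs
    by (metis real_sqrt_le_mono)
  hence "m \<le> 1/2 + sqrt (2 * real L + 1/4)" by linarith
  moreover have "real (b 0) = real L - m" using b0 cZS m_def by simp
  ultimately show ?thesis by linarith
qed

end
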